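(* Let $(\mathcal S,\mathcal A,P,r)$ be a finite MDP such that $\mathcal P^\pi g^\star=g^\star$ for every policy $\pi$, and let $(g^\star,h^\star)$ be a solution of the modified Bellman equations. Let $\lambda_{k+1}\le\lambda_k<1$ for $k\ge1$, set $\lambda_0=1$, let $V^0\in\mathbb R^n$, $V^k=\lambda_kV^0+(1-\lambda_k)TV^{k-1}$ for $k\ge1$, and let $\pi_k$ be greedy policies, $T^{\pi_k}V^k=TV^k$. Then there exists $K>0$ such that for all $k>K$, \[\|g^\star-g^{\pi_k}\|_\infty\le\|TV^k-V^k-g^\star\|_\infty\le2\Big(\sum_{i=0}^k\prod_{j=i+1}^k(1-\lambda_j)\lambda_i^2\Big)\|V^0-h^\star\|_\infty.\]
   Context: An MDP $(\mathcal S,\mathcal A,P,r)$ has finite state space $\mathcal S$ ($|\mathcal S|=n$, functions identified with $\mathbb R^n$), finite action space, transition probabilities $P(s'\mid s,a)$ and bounded reward $r$. For a policy $\pi$: $r^\pi(s)=\sum_a\pi(a\mid s)r(s,a)$, $\mathcal P^\pi(s,s')=\sum_a\pi(a\mid s)P(s'\mid s,a)$, $g^\pi(s)=\liminf_{T\to\infty}\frac1T\mathbb E_\pi[\sum_{t=0}^{T-1}r(s_t,a_t)\mid s_0=s]$, $g^\star=\max_\pi g^\pi$. $T^\pi V=r^\pi+\mathcal P^\pi V$, $(TV)(s)=\max_a\{r(s,a)+\sum_{s'}P(s'\mid s,a)V(s')\}$. A pair $(g,h)$ solves the modified Bellman equations if $\max_a\sum_{s'}P(s'\mid s,a)g(s')=g(s)$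 and $\max_a\{r(s,a)+\sum_{s'}P(s'\mid s,a)h(s')\}=h(s)+g(s)$ for all $s$, with some policy attaining both maxima simultaneously; the first component of any solution equals $g^\star$. The convention $\lambda_0=1$ is the paper's; products over empty index ranges equal $1$. *)

theory Defs
  imports "HOL-Analysis.Analysis"
begin

definition is_mdp :: "('s::finite \<Rightarrow> 'a::finite \<Rightarrow> 's \<Rightarrow> real) \<Rightarrow> bool" where
  "is_mdp P \<longleftrightarrow> (\<forall>s a s'. 0 \<le> P s a s') \<and> (\<forall>s a. (\<Sum>s'\<in>UNIV. P s a s') = 1)"

definition is_policy :: "('s::finite \<Rightarrow> 'a::finite \<Rightarrow> real) \<Rightarrow> bool" where
  "is_policy pol \<longleftrightarrow> (\<forall>s a. 0 \<le> pol s a) \<and> (\<forall>s. (\<Sum>a\<in>UNIV. pol s a) = 1)"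

definition r_pi :: "('s::finite \<Rightarrow> 'a::finite \<Rightarrow> real) \<Rightarrow> ('s \<Rightarrow> 'a \<Rightarrow> real) \<Rightarrow> 's \<Rightarrow> real" where
  "r_pi r pol s = (\<Sum>a\<in>UNIV. pol s a * r s a)"

definition P_pi :: "('s::finite \<Rightarrow> 'a::finite \<Rightarrow> 's \<Rightarrow> real) \<Rightarrow> ('s \<Rightarrow> 'a \<Rightarrow> real) \<Rightarrow> 's \<Rightarrow> 's \<Rightarrow> real" where
  "P_pi P pol s s' = (\<Sum>a\<in>UNIV. pol s a * P s a s')"

definition P_op :: "('s::finite \<Rightarrow> 'a::finite \<Rightarrow> 's \<Rightarrow> real) \<Rightarrow> ('s \<Rightarrow> 'a \<Rightarrow> real) \<Rightarrow> ('s \<Rightarrow> real) \<Rightarrow> 's \<Rightarrow> real" where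
  "P_op P pol V s = (\<Sum>s'\<in>UNIV. P_pi P pol s s' * V s')"

definition T_pi :: "('s::finite \<Rightarrow> 'a::finite \<Rightarrow> 's \<Rightarrow> real) \<Rightarrow> ('s \<Rightarrow> 'a \<Rightarrow> real) \<Rightarrow> ('s \<Rightarrow> 'a \<Rightarrow> real) \<Rightarrow> ('s \<Rightarrow> real) \<Rightarrow> 's \<Rightarrow> real" where
  "T_pi P r pol V s = r_pi r pol s + P_op P pol V s"

definition T_opt :: "('s::finite \<Rightarrow> 'a::finite \<Rightarrow> 's \<Rightarrow> real) \<Rightarrow> ('s \<Rightarrow> 'a \<Rightarrow> real) \<Rightarrow> ('s \<Rightarrow> real) \<Rightarrow> 's \<Rightarrow> real" where
  "T_opt P r V s = Max (range (\<lambda>a. r s a + (\<Sum>s'\<in>UNIV. P s a s' * V s')))"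

text \<open>E_pi[ r(s_t,a_t) | s_0 = s ] = ((P^pol)^t r^pol)(s); gain is the liminf of Cesaro averages.\<close>
definition expected_reward :: "('s::finite \<Rightarrow> 'a::finite \<Rightarrow> 's \<Rightarrow> real) \<Rightarrow> ('s \<Rightarrow> 'a \<Rightarrow> real) \<Rightarrow> ('s \<Rightarrow> 'a \<Rightarrow> real) \<Rightarrow> nat \<Rightarrow> 's \<Rightarrow> real" where
  "expected_reward P r pol t = (P_op P pol ^^ t) (r_pi r pol)"

definition gain :: "('s::finite \<Rightarrow> 'a::finite \<Rightarrow> 's \<Rightarrow> real) \<Rightarrow> ('s \<Rightarrow> 'a \<Rightarrow> real) \<Rightarrow> ('s \<Rightarrow> 'a \<Rightarrow> real) \<Rightarrow> 's \<Rightarrow> real" where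
  "gain P r pol s = real_of_ereal (liminf (\<lambda>T::nat. ereal ((1 / real T) * (\<Sum>t<T. expected_reward P r pol t s))))"

definition opt_gain :: "('s::finite \<Rightarrow> 'a::finite \<Rightarrow> 's \<Rightarrow> real) \<Rightarrow> ('s \<Rightarrow> 'a \<Rightarrow> real) \<Rightarrow> 's \<Rightarrow> real" where
  "opt_gain P r s = (SUP pol\<in>{pol. is_policy pol}. gain P r pol s)"

definition modified_bellman :: "('s::finite \<Rightarrow> 'a::finite \<Rightarrow> 's \<Rightarrow> real) \<Rightarrow> ('s \<Rightarrow> 'a \<Rightarrow> real) \<Rightarrow> ('s \<Rightarrow> real) \<Rightarrow> ('s \<Rightarrow> real) \<Rightarrow> bool" where
  "modified_bellman P r g h \<longleftrightarrow>
     (\<forall>s. Max (range (\<lambda>a. \<Sum>s'\<in>UNIV. P s a s' * g s')) = g s) \<and>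
     (\<forall>s. Max (range (\<lambda>a. r s a + (\<Sum>s'\<in>UNIV. P s a s' * h s'))) = h s + g s) \<and>
     (\<exists>pol. is_policy pol \<and> (\<forall>s. P_op P pol g s = g s \<and> T_pi P r pol h s = h s + g s))"

definition supnorm :: "('s::finite \<Rightarrow> real) \<Rightarrow> real" where
  "supnorm f = Max (range (\<lambda>s. \<bar>f s\<bar>))"

end

theory Submission
  imports Defs
begin


lemma Max_range_le:
  fixes f g :: "'a::finite \<Rightarrow> real"
  assumes "\<And>a. f a \<le> g a + M"
  shows "Max (range f) \<le> Max (range g) + M"
proof -
  have "Max (range f) \<in> range f" by (rule Max_in) auto
  then obtain a where "Max (range f) = f a" by blast
  also have "\<dots> \<le> g a + M" by (rule assms)
  also have "g a \<le> Max (range g)" by (rule Max_ge) auto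
  finally show ?thesis by simp
qed

lemma wsum_bound:
  fixes w x :: "'s::finite \<Rightarrow> real"
  assumes "\<And>s. 0 \<le> w s" "sum w UNIV = 1" "\<And>s. \<bar>x s\<bar> \<le> M"
  shows "\<bar>\<Sum>s\<in>UNIV. w s * x s\<bar> \<le> M"
proof -
  have "\<bar>\<Sum>s\<in>UNIV. w s * x s\<bar> \<le> (\<Sum>s\<in>UNIV. \<bar>w s * x s\<bar>)" by (rule sum_abs)
  also have "\<dots> \<le> (\<Sum>s\<in>UNIV. w s * M)"
    by (rule sum_mono) (simp add: abs_mult assms(1) mult_left_mono assms(3))
  also have "\<dots> = M" using assms(2) by (simp add: sum_distrib_right[symmetric])
  finally show ?thesis .
qed

lemma T_nonexp:
  assumes mdp: "is_mdp P" and b: "\<And>s. \<bar>U s - U' s\<bar> \<le> M"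
  shows "\<bar>T_opt P r U s - T_opt P r U' s\<bar> \<le> M"
proof -
  have d: "\<bar>(r s a + (\<Sum>s'\<in>UNIV. P s a s' * U s')) - (r s a + (\<Sum>s'\<in>UNIV. P s a s' * U' s'))\<bar> \<le> M" for a
  proof -
    have "(r s a + (\<Sum>s'\<in>UNIV. P s a s' * U s')) - (r s a + (\<Sum>s'\<in>UNIV. P s a s' * U' s'))
       = (\<Sum>s'\<in>UNIV. P s a s' * (U s' - U' s'))"
      by (simp add: sum_subtractf right_diff_distrib)
    also have "\<bar>\<dots>\<bar> \<le> M"
      using mdp b by (intro wsum_bound) (auto simp: is_mdp_def)
    finally show ?thesis .
  qed
  have d1: "r s a + (\<Sum>s'\<in>UNIV. P s a s' * U s') \<le> (r s a + (\<Sum>s'\<in>UNIV. P s a s' * U' s')) + M" for a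
    using d[of a] by (simp add: abs_diff_le_iff)
  have d2: "r s a + (\<Sum>s'\<in>UNIV. P s a s' * U' s') \<le> (r s a + (\<Sum>s'\<in>UNIV. P s a s' * U s')) + M" for a
    using d[of a] by (simp add: abs_diff_le_iff)
  have 1: "T_opt P r U s \<le> T_opt P r U' s + M"
    unfolding T_opt_def by (rule Max_range_le) (rule d1)
  have 2: "T_opt P r U' s \<le> T_opt P r U s + M"
    unfolding T_opt_def by (rule Max_range_le) (rule d2)
  from 1 2 show ?thesis by linarith
qed

lemma T_shift:
  assumes inv: "\<And>a. (\<Sum>s'\<in>UNIV. P s a s' * g s') = g s"
  shows "T_opt P r (\<lambda>s'. U s' + c * g s') s = T_opt P r U s + c * g s"
proof -
  have e: "r s a + (\<Sum>s'\<in>UNIV. P s a s' * (U s' + c * g s')) = (r s a + (\<Sum>s'\<in>UNIV. P s a s' * U s')) + c * g s" for a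
  proof -
    have "(\<Sum>s'\<in>UNIV. P s a s' * (U s' + c * g s')) = (\<Sum>s'\<in>UNIV. P s a s' * U s') + c * (\<Sum>s'\<in>UNIV. P s a s' * g s')"
      by (simp add: distrib_left sum.distrib sum_distrib_left algebra_simps)
    then show ?thesis using inv[of a] by simp
  qed
  have 1: "T_opt P r (\<lambda>s'. U s' + c * g s') s \<le> T_opt P r U s + c * g s"
    unfolding T_opt_def by (rule Max_range_le) (simp add: e)
  have 2: "T_opt P r U s \<le> T_opt P r (\<lambda>s'. U s' + c * g s') s + (- c * g s)"
    unfolding T_opt_def by (rule Max_range_le) (simp add: e)
  from 1 2 show ?thesis by linarith
qed

definition bsum :: "(nat \<Rightarrow> real) \<Rightarrow> nat \<Rightarrow> real" where
  "bsum lam k = (\<Sum>i=0..k. (\<Prod>j=i+1..k. (1 - lam j)) * (lam i)\<^sup>2)"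

lemma bsum_0: "lam 0 = 1 \<Longrightarrow> bsum lam 0 = 1"
  by (simp add: bsum_def)

lemma bsum_Suc: "bsum lam (Suc k) = (1 - lam (Suc k)) * bsum lam k + (lam (Suc k))\<^sup>2"
proof -
  have "bsum lam (Suc k) = (\<Sum>i=0..k. (\<Prod>j=i+1..Suc k. (1 - lam j)) * (lam i)\<^sup>2) + (lam (Suc k))\<^sup>2"
    by (simp add: bsum_def sum.atLeast0_atMost_Suc)
  also have "(\<Sum>i=0..k. (\<Prod>j=i+1..Suc k. (1 - lam j)) * (lam i)\<^sup>2)
      = (\<Sum>i=0..k. (1 - lam (Suc k)) * ((\<Prod>j=i+1..k. (1 - lam j)) * (lam i)\<^sup>2))"
    by (rule sum.cong) (auto simp: prod.nat_ivl_Suc')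
  finally show ?thesis by (simp add: bsum_def sum_distrib_left)
qed



lemma halpern:
  fixes N :: "('s \<Rightarrow> real) \<Rightarrow> ('s \<Rightarrow> real)" and W :: "nat \<Rightarrow> 's \<Rightarrow> real" and lam :: "nat \<Rightarrow> real"
  assumes nonexp: "\<And>X Y M s. (\<And>s. \<bar>X s - Y s\<bar> \<le> M) \<Longrightarrow> \<bar>N X s - N Y s\<bar> \<le> M"
    and N0: "N (\<lambda>s. 0) = (\<lambda>s. 0)"
    and lam0: "lam 0 = 1"
    and lam_mono: "\<And>k. k \<ge> 1 \<Longrightarrow> lam (Suc k) \<le> lam k"
    and lam_le1: "\<And>k. lam k \<le> 1"
    and lam_nonneg: "\<And>k. 0 \<le> lam k"
    and Wrec: "\<And>k. W (Suc k) = (\<lambda>s. lam (Suc k) * W 0 s + (1 - lam (Suc k)) * N (W k) s)"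
    and R: "\<And>s. \<bar>W 0 s\<bar> \<le> R"
  shows "\<bar>N (W k) s - W k s\<bar> \<le> 2 * bsum lam k * R"
proof -
  have Nb: "\<bar>N X s\<bar> \<le> M" if "\<And>s. \<bar>X s\<bar> \<le> M" for X M s
    using nonexp[of X "\<lambda>s. 0" M s] that N0 by (metis diff_zero)
  have Rnn: "0 \<le> R" using R[of s] by linarith
  have NR: "\<bar>N (W 0) s\<bar> \<le> R" for s by (rule Nb) (rule R)
  have Wb: "\<bar>W k s\<bar> \<le> R" for k s
  proof (induction k arbitrary: s)
    case 0 then show ?case by (rule R)
  next
    case (Suc k)
    have n: "\<bar>N (W k) s\<bar> \<le> R" by (rule Nb) (rule Suc.IH)
    have "\<bar>W (Suc k) s\<bar> = \<bar>lam (Suc k) * W 0 s + (1 - lam (Suc k)) * N (W k) s\<bar>"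
      by (simp add: Wrec)
    also have "\<dots> \<le> \<bar>lam (Suc k) * W 0 s\<bar> + \<bar>(1 - lam (Suc k)) * N (W k) s\<bar>"
      by (rule abs_triangle_ineq)
    also have "\<dots> = lam (Suc k) * \<bar>W 0 s\<bar> + (1 - lam (Suc k)) * \<bar>N (W k) s\<bar>"
      using lam_nonneg[of "Suc k"] lam_le1[of "Suc k"] by (simp add: abs_mult)
    also have "\<dots> \<le> lam (Suc k) * R + (1 - lam (Suc k)) * R"
      using lam_nonneg[of "Suc k"] lam_le1[of "Suc k"] R[of s] n
      by (intro add_mono mult_left_mono) auto
    finally show ?case by (simp add: algebra_simps)
  qed
  have NWb: "\<bar>N (W k) s\<bar> \<le> R" for k s by (rule Nb) (rule Wb)
  have Db: "\<bar>W (Suc k) s - W k s\<bar> \<le> (2 * bsum lam k - 2 * lam (Suc k)) * R" for k s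
  proof (induction k arbitrary: s)
    case 0
    have "W (Suc 0) s - W 0 s = (1 - lam 1) * (N (W 0) s - W 0 s)"
      by (simp add: Wrec algebra_simps)
    also have "\<bar>\<dots>\<bar> \<le> (1 - lam 1) * (2 * R)"
      using lam_le1[of 1] NR[of s] R[of s]
      by (simp add: abs_mult) (intro mult_left_mono; auto)
    finally show ?case by (simp add: bsum_0[of lam, OF lam0] algebra_simps)
  next
    case (Suc k)
    let ?a = "lam (Suc (Suc k))" and ?b = "lam (Suc k)"
    have "W (Suc (Suc k)) s - W (Suc k) s
       = (?b - ?a) * (N (W (Suc k)) s - W 0 s) + (1 - ?b) * (N (W (Suc k)) s - N (W k) s)"
      by (simp add: Wrec algebra_simps)
    also have "\<bar>\<dots>\<bar> \<le> (?b - ?a) * (2 * R) + (1 - ?b) * ((2 * bsum lam k - 2 * ?b) * R)"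
    proof -
      have m: "?a \<le> ?b" using lam_mono[of "Suc k"] by simp
      have t1: "\<bar>N (W (Suc k)) s - W 0 s\<bar> \<le> 2 * R"
        using NWb[of "Suc k" s] R[of s] by linarith
      have t2: "\<bar>N (W (Suc k)) s - N (W k) s\<bar> \<le> (2 * bsum lam k - 2 * ?b) * R"
        by (rule nonexp) (rule Suc.IH)
      have "\<bar>(?b - ?a) * (N (W (Suc k)) s - W 0 s)\<bar> \<le> (?b - ?a) * (2 * R)"
        using m t1 by (simp add: abs_mult mult_left_mono)
      moreover have "\<bar>(1 - ?b) * (N (W (Suc k)) s - N (W k) s)\<bar> \<le> (1 - ?b) * ((2 * bsum lam k - 2 * ?b) * R)"
        using lam_le1[of "Suc k"] t2 by (simp add: abs_mult mult_left_mono)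
      ultimately show ?thesis by (rule order_trans[OF abs_triangle_ineq add_mono])
    qed
    also have "\<dots> = (2 * bsum lam (Suc k) - 2 * ?a) * R"
      by (simp add: bsum_Suc algebra_simps power2_eq_square)
    finally show ?case .
  qed
  show ?thesis
  proof (cases k)
    case 0
    then show ?thesis
      using NR[of s] R[of s] by (simp add: bsum_0[of lam, OF lam0])
  next
    case (Suc m)
    let ?b = "lam (Suc m)"
    have "N (W (Suc m)) s - W (Suc m) s
       = ?b * (N (W (Suc m)) s - W 0 s) + (1 - ?b) * (N (W (Suc m)) s - N (W m) s)"
      by (simp add: Wrec algebra_simps)
    also have "\<bar>\<dots>\<bar> \<le> ?b * (2 * R) + (1 - ?b) * ((2 * bsum lam m - 2 * ?b) * R)"
    proof -
      have t1: "\<bar>N (W (Suc m)) s - W 0 s\<bar> \<le> 2 * R"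
        using NWb[of "Suc m" s] R[of s] by linarith
      have t2: "\<bar>N (W (Suc m)) s - N (W m) s\<bar> \<le> (2 * bsum lam m - 2 * ?b) * R"
        by (rule nonexp) (rule Db)
      have "\<bar>?b * (N (W (Suc m)) s - W 0 s)\<bar> \<le> ?b * (2 * R)"
        using lam_nonneg[of "Suc m"] t1 by (simp add: abs_mult mult_left_mono)
      moreover have "\<bar>(1 - ?b) * (N (W (Suc m)) s - N (W m) s)\<bar> \<le> (1 - ?b) * ((2 * bsum lam m - 2 * ?b) * R)"
        using lam_le1[of "Suc m"] t2 by (simp add: abs_mult mult_left_mono)
      ultimately show ?thesis by (rule order_trans[OF abs_triangle_ineq add_mono])
    qed
    also have "\<dots> = 2 * bsum lam (Suc m) * R"
      by (simp add: bsum_Suc algebra_simps power2_eq_square)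
    finally show ?thesis using Suc by simp
  qed
qed



lemma P_op_add: "P_op P pol (\<lambda>s. f s + g s) = (\<lambda>s. P_op P pol f s + P_op P pol g s)"
  by (auto simp: P_op_def sum.distrib distrib_left)

lemma P_op_diff: "P_op P pol (\<lambda>s. f s - g s) = (\<lambda>s. P_op P pol f s - P_op P pol g s)"
  by (auto simp: P_op_def sum_subtractf right_diff_distrib)

lemma P_op_bound:
  assumes "is_mdp P" "is_policy pol" "\<And>s. \<bar>f s\<bar> \<le> M"
  shows "\<bar>P_op P pol f s\<bar> \<le> M"
proof -
  have nn: "0 \<le> P_pi P pol s s'" for s'
    using assms(1,2) unfolding P_pi_def is_mdp_def is_policy_def by (auto intro!: sum_nonneg)
  have "(\<Sum>s'\<in>UNIV. P_pi P pol s s') = (\<Sum>s'\<in>UNIV. \<Sum>a\<in>UNIV. pol s a * P s a s')"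
    unfolding P_pi_def ..
  also have "\<dots> = (\<Sum>a\<in>UNIV. \<Sum>s'\<in>UNIV. pol s a * P s a s')"
    by (rule sum.swap)
  also have "\<dots> = (\<Sum>a\<in>UNIV. pol s a * (\<Sum>s'\<in>UNIV. P s a s'))"
    by (simp only: sum_distrib_left)
  also have "\<dots> = 1" using assms(1,2) unfolding is_mdp_def is_policy_def by simp
  finally have "(\<Sum>s'\<in>UNIV. P_pi P pol s s') = 1" .
  then show ?thesis unfolding P_op_def using nn assms(3) by (intro wsum_bound) auto
qed

lemma pow_add: "(P_op P pol ^^ t) (\<lambda>s. f s + g s) = (\<lambda>s. (P_op P pol ^^ t) f s + (P_op P pol ^^ t) g s)"
  by (induction t) (auto simp: P_op_add)

lemma pow_diff: "(P_op P pol ^^ t) (\<lambda>s. f s - g s) = (\<lambda>s. (P_op P pol ^^ t) f s - (P_op P pol ^^ t) g s)"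
  by (induction t) (auto simp: P_op_diff)

lemma pow_bound:
  assumes "is_mdp P" "is_policy pol" "\<And>s. \<bar>f s\<bar> \<le> M"
  shows "\<bar>(P_op P pol ^^ t) f s\<bar> \<le> M"
proof (induction t arbitrary: s)
  case 0 then show ?case using assms(3) by simp
next
  case (Suc t)
  have "\<bar>P_op P pol ((P_op P pol ^^ t) f) s\<bar> \<le> M"
    by (rule P_op_bound[OF assms(1,2)]) (rule Suc.IH)
  then show ?case by simp
qed

lemma pow_fix: "P_op P pol g = g \<Longrightarrow> (P_op P pol ^^ t) g = g"
  by (induction t) auto

lemma liminf_close:
  fixes a :: "nat \<Rightarrow> real"
  assumes "\<And>T. T \<ge> 1 \<Longrightarrow> \<bar>a T - x\<bar> \<le> \<epsilon> + C / real T"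
  shows "\<bar>x - real_of_ereal (liminf (\<lambda>T. ereal (a T)))\<bar> \<le> \<epsilon>"
proof -
  have c0: "(\<lambda>T. C / real T) \<longlonglongrightarrow> 0" by (rule lim_const_over_n)
  have t1: "(\<lambda>T. ereal (x - \<epsilon> - C / real T)) \<longlonglongrightarrow> ereal (x - \<epsilon>)"
    unfolding lim_ereal using tendsto_diff[OF tendsto_const c0, of "x - \<epsilon>"] by simp
  have t2: "(\<lambda>T. ereal (x + \<epsilon> + C / real T)) \<longlonglongrightarrow> ereal (x + \<epsilon>)"
    unfolding lim_ereal using tendsto_add[OF tendsto_const c0, of "x + \<epsilon>"] by simp
  have ev1: "eventually (\<lambda>T. ereal (x - \<epsilon> - C / real T) \<le> ereal (a T)) sequentially"
    unfolding eventually_sequentially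
  proof (intro exI[of _ 1] allI impI)
    fix n :: nat assume "1 \<le> n"
    from assms[OF this] show "ereal (x - \<epsilon> - C / real n) \<le> ereal (a n)"
      unfolding abs_le_iff by simp
  qed
  have ev2: "eventually (\<lambda>T. ereal (a T) \<le> ereal (x + \<epsilon> + C / real T)) sequentially"
    unfolding eventually_sequentially
  proof (intro exI[of _ 1] allI impI)
    fix n :: nat assume "1 \<le> n"
    from assms[OF this] show "ereal (a n) \<le> ereal (x + \<epsilon> + C / real n)"
      unfolding abs_le_iff by simp
  qed
  have "ereal (x - \<epsilon>) \<le> liminf (\<lambda>T. ereal (a T))"
    using Liminf_mono[OF ev1] lim_imp_Liminf[OF _ t1] by simp
  moreover have "liminf (\<lambda>T. ereal (a T)) \<le> ereal (x + \<epsilon>)"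
    using Liminf_mono[OF ev2] lim_imp_Liminf[OF _ t2] by simp
  ultimately show ?thesis
    by (cases "liminf (\<lambda>T. ereal (a T))") auto
qed



lemma gain_close:
  fixes P :: "'s::finite \<Rightarrow> 'a::finite \<Rightarrow> 's \<Rightarrow> real"
  assumes mdp: "is_mdp P" and pol: "is_policy pol"
    and Qg: "P_op P pol g = g"
    and greedy: "T_pi P r pol V = T_opt P r V"
    and eb: "\<And>s. \<bar>T_opt P r V s - V s - g s\<bar> \<le> \<epsilon>"
  shows "\<bar>g s - gain P r pol s\<bar> \<le> \<epsilon>"
proof -
  define Q where "Q = P_op P pol"
  define e where "e = (\<lambda>s. T_opt P r V s - V s - g s)"
  have rr: "r_pi r pol = (\<lambda>s. ((V s + g s) + e s) - Q V s)"
  proof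
    fix s
    have "T_pi P r pol V s = T_opt P r V s" using greedy by simp
    then show "r_pi r pol s = ((V s + g s) + e s) - Q V s"
      unfolding T_pi_def e_def Q_def by simp
  qed
  have step: "(Q ^^ t) (r_pi r pol) s = (Q ^^ t) V s + g s + (Q ^^ t) e s - (Q ^^ Suc t) V s" for t s
  proof -
    have "(Q ^^ t) (r_pi r pol) s = (Q ^^ t) V s + (Q ^^ t) g s + (Q ^^ t) e s - (Q ^^ t) (Q V) s"
      unfolding rr Q_def pow_diff pow_add by simp
    moreover have "(Q ^^ t) g = g" unfolding Q_def by (rule pow_fix[OF Qg])
    moreover have "(Q ^^ t) (Q V) = (Q ^^ Suc t) V" by (simp add: funpow_swap1)
    ultimately show ?thesis by simp
  qed
  have ident: "(\<Sum>t<T. (Q ^^ t) (r_pi r pol) s) = (\<Sum>t<T. (Q ^^ t) e s) + real T * g s + V s - (Q ^^ T) V s" for T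
    by (induction T) (simp_all add: step algebra_simps)
  define C where "C = (\<Sum>s\<in>UNIV. \<bar>V s\<bar>)"
  have VC: "\<bar>V s\<bar> \<le> C" for s unfolding C_def
    by (rule member_le_sum) auto
  have eQ: "\<bar>(Q ^^ t) e s\<bar> \<le> \<epsilon>" for t s
    unfolding Q_def by (rule pow_bound[OF mdp pol]) (simp add: e_def eb)
  have VQ: "\<bar>(Q ^^ t) V s\<bar> \<le> C" for t s
    unfolding Q_def by (rule pow_bound[OF mdp pol]) (rule VC)
  have avg: "\<bar>(1 / real T) * (\<Sum>t<T. expected_reward P r pol t s) - g s\<bar> \<le> \<epsilon> + (2 * C) / real T"
    if T1: "T \<ge> 1" for T
  proof -
    have Tpos: "real T > 0" using T1 by simp
    have "(\<Sum>t<T. expected_reward P r pol t s) = (\<Sum>t<T. (Q ^^ t) (r_pi r pol) s)"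
      by (simp add: expected_reward_def Q_def)
    also have "\<dots> = (\<Sum>t<T. (Q ^^ t) e s) + real T * g s + V s - (Q ^^ T) V s" by (rule ident)
    finally have "(1 / real T) * (\<Sum>t<T. expected_reward P r pol t s) - g s
        = ((\<Sum>t<T. (Q ^^ t) e s) + (V s - (Q ^^ T) V s)) / real T"
      using Tpos by (simp add: field_simps)
    also have "\<bar>\<dots>\<bar> = \<bar>(\<Sum>t<T. (Q ^^ t) e s) + (V s - (Q ^^ T) V s)\<bar> / real T"
      using Tpos by simp
    also have "\<dots> \<le> (real T * \<epsilon> + 2 * C) / real T"
    proof (rule divide_right_mono)
      have "\<bar>\<Sum>t<T. (Q ^^ t) e s\<bar> \<le> (\<Sum>t<T. \<bar>(Q ^^ t) e s\<bar>)" by (rule sum_abs)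
      also have "\<dots> \<le> (\<Sum>t<T. \<epsilon>)" by (rule sum_mono) (rule eQ)
      also have "\<dots> = real T * \<epsilon>" by simp
      finally have 1: "\<bar>\<Sum>t<T. (Q ^^ t) e s\<bar> \<le> real T * \<epsilon>" .
      have 2: "\<bar>V s - (Q ^^ T) V s\<bar> \<le> 2 * C" using VC[of s] VQ[of T s] by linarith
      show "\<bar>(\<Sum>t<T. (Q ^^ t) e s) + (V s - (Q ^^ T) V s)\<bar> \<le> real T * \<epsilon> + 2 * C"
        using 1 2 by linarith
    qed (use Tpos in simp)
    also have "\<dots> = \<epsilon> + (2 * C) / real T" using Tpos by (simp add: field_simps)
    finally show ?thesis .
  qed
  show ?thesis unfolding gain_def
    by (rule liminf_close) (rule avg)
qed



fun cseq :: "(nat \<Rightarrow> real) \<Rightarrow> nat \<Rightarrow> real" where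
  "cseq lam 0 = 0"
| "cseq lam (Suc k) = (1 - lam (Suc k)) * (1 + cseq lam k)"

definition Nop where
  "Nop P r g h W = (\<lambda>s. T_opt P r (\<lambda>s'. h s' + W s') s - h s - g s)"

lemma abs_le_supnorm: "\<bar>f s\<bar> \<le> supnorm f"
  unfolding supnorm_def by (rule Max_ge) auto

lemma supnorm_le: "(\<And>s. \<bar>f s\<bar> \<le> B) \<Longrightarrow> supnorm f \<le> B"
  unfolding supnorm_def by (rule Max.boundedI) auto

theorem corollary5:
  fixes P :: "'s::finite \<Rightarrow> 'a::finite \<Rightarrow> 's \<Rightarrow> real"
    and r :: "'s \<Rightarrow> 'a \<Rightarrow> real"
    and h :: "'s \<Rightarrow> real"
    and lam :: "nat \<Rightarrow> real"
    and V :: "nat \<Rightarrow> 's \<Rightarrow> real"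
    and pik :: "nat \<Rightarrow> 's \<Rightarrow> 'a \<Rightarrow> real"
  assumes mdp: "is_mdp P"
    and gstar_inv: "\<And>pol. is_policy pol \<Longrightarrow> P_op P pol (opt_gain P r) = opt_gain P r"
    and mbe: "modified_bellman P r (opt_gain P r) h"
    and lam0: "lam 0 = 1"
    and lam_mono: "\<And>k. k \<ge> 1 \<Longrightarrow> lam (Suc k) \<le> lam k"
    and lam_lt1: "\<And>k. k \<ge> 1 \<Longrightarrow> lam k < 1"
    and lam_nonneg: "\<And>k. 0 \<le> lam k"
    and V_rec: "\<And>k. k \<ge> 1 \<Longrightarrow> V k = (\<lambda>s. lam k * V 0 s + (1 - lam k) * T_opt P r (V (k - 1)) s)"
    and pik_policy: "\<And>k. is_policy (pik k)"
    and pik_greedy: "\<And>k. T_pi P r (pik k) (V k) = T_opt P r (V k)"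
  shows "\<exists>K::nat. K > 0 \<and> (\<forall>k>K.
           supnorm (\<lambda>s. opt_gain P r s - gain P r (pik k) s)
             \<le> supnorm (\<lambda>s. T_opt P r (V k) s - V k s - opt_gain P r s) \<and>
           supnorm (\<lambda>s. T_opt P r (V k) s - V k s - opt_gain P r s)
             \<le> 2 * (\<Sum>i=0..k. (\<Prod>j=i+1..k. (1 - lam j)) * (lam i)\<^sup>2) * supnorm (\<lambda>s. V 0 s - h s))"
proof -
  define g where "g = opt_gain P r"
  have ginv: "(\<Sum>s'\<in>UNIV. P s a s' * g s') = g s" for s a
  proof -
    define pol :: "'s \<Rightarrow> 'a \<Rightarrow> real" where "pol = (\<lambda>s a'. if a' = a then 1 else 0)"
    have "is_policy pol" unfolding is_policy_def pol_def by simp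
    from gstar_inv[OF this] have "P_op P pol g s = g s" unfolding g_def by simp
    moreover have "P_op P pol g s = (\<Sum>s'\<in>UNIV. P s a s' * g s')"
    proof -
      have "P_pi P pol s s' = P s a s'" for s'
      proof -
        have "P_pi P pol s s' = (\<Sum>a'\<in>UNIV. if a' = a then P s a' s' else 0)"
          unfolding P_pi_def pol_def by (rule sum.cong) auto
        also have "\<dots> = P s a s'" by (subst sum.delta) auto
        finally show ?thesis .
      qed
      then show ?thesis unfolding P_op_def by simp
    qed
    ultimately show ?thesis by simp
  qed
  have Th: "T_opt P r h s = h s + g s" for s
    using mbe unfolding modified_bellman_def T_opt_def g_def by blast
  define N where "N = Nop P r g h"
  define W where "W = (\<lambda>k s. V k s - h s - cseq lam k * g s)"
  define R where "R = supnorm (\<lambda>s. V 0 s - h s)"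
  have lam_le1: "lam k \<le> 1" for k
    using lam_lt1[of k] lam0 by (cases k) auto
  have nonexp: "\<bar>N X s - N Y s\<bar> \<le> M" if "\<And>s. \<bar>X s - Y s\<bar> \<le> M" for X Y M s
  proof -
    have "\<bar>T_opt P r (\<lambda>s'. h s' + X s') s - T_opt P r (\<lambda>s'. h s' + Y s') s\<bar> \<le> M"
      by (rule T_nonexp[OF mdp]) (simp add: that)
    then show ?thesis unfolding N_def Nop_def by simp
  qed
  have N0: "N (\<lambda>s. 0) = (\<lambda>s. 0)"
    unfolding N_def Nop_def using Th by simp
  have TV: "T_opt P r (V k) s = N (W k) s + h s + g s + cseq lam k * g s" for k s
  proof -
    have "V k = (\<lambda>s'. (h s' + W k s') + cseq lam k * g s')" unfolding W_def by auto
    then have "T_opt P r (V k) s = T_opt P r (\<lambda>s'. h s' + W k s') s + cseq lam k * g s"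
      using T_shift[of P s g r "\<lambda>s'. h s' + W k s'" "cseq lam k"] ginv by simp
    then show ?thesis unfolding N_def Nop_def by simp
  qed
  have Wk: "W k s = V k s - h s - cseq lam k * g s" for k s unfolding W_def by simp
  have Wrec: "W (Suc k) = (\<lambda>s. lam (Suc k) * W 0 s + (1 - lam (Suc k)) * N (W k) s)" for k
  proof
    fix s
    have "V (Suc k) s = lam (Suc k) * V 0 s + (1 - lam (Suc k)) * T_opt P r (V k) s"
      using V_rec[of "Suc k"] by simp
    then show "W (Suc k) s = lam (Suc k) * W 0 s + (1 - lam (Suc k)) * N (W k) s"
      by (simp add: TV algebra_simps Wk[of "Suc k" s] Wk[of 0 s])
  qed
  have RW: "\<bar>W 0 s\<bar> \<le> R" for s
    unfolding R_def W_def using abs_le_supnorm[of "\<lambda>s. V 0 s - h s" s] by simp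
  have eq: "T_opt P r (V k) s - V k s - g s = N (W k) s - W k s" for k s
    by (simp add: TV W_def)
  have bound2: "supnorm (\<lambda>s. T_opt P r (V k) s - V k s - g s) \<le> 2 * bsum lam k * R" for k
  proof (rule supnorm_le)
    fix s
    show "\<bar>T_opt P r (V k) s - V k s - g s\<bar> \<le> 2 * bsum lam k * R"
      unfolding eq
      by (rule halpern[OF nonexp N0 lam0 lam_mono lam_le1 lam_nonneg Wrec RW])
  qed
  have bound1: "supnorm (\<lambda>s. g s - gain P r (pik k) s) \<le> supnorm (\<lambda>s. T_opt P r (V k) s - V k s - g s)" for k
  proof (rule supnorm_le)
    fix s
    show "\<bar>g s - gain P r (pik k) s\<bar> \<le> supnorm (\<lambda>s. T_opt P r (V k) s - V k s - g s)"
    proof (rule gain_close[OF mdp pik_policy, where V="V k"])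
      show "P_op P (pik k) g = g" by (simp add: g_def gstar_inv[OF pik_policy])
      show "T_pi P r (pik k) (V k) = T_opt P r (V k)" by (rule pik_greedy)
      show "\<bar>T_opt P r (V k) s - V k s - g s\<bar> \<le> supnorm (\<lambda>s. T_opt P r (V k) s - V k s - g s)" for s
        by (rule abs_le_supnorm)
    qed
  qed
  have b1: "supnorm (\<lambda>s. opt_gain P r s - gain P r (pik k) s)
             \<le> supnorm (\<lambda>s. T_opt P r (V k) s - V k s - opt_gain P r s)" for k
    using bound1[of k] unfolding g_def .
  have b2: "supnorm (\<lambda>s. T_opt P r (V k) s - V k s - opt_gain P r s)
             \<le> 2 * (\<Sum>i=0..k. (\<Prod>j=i+1..k. (1 - lam j)) * (lam i)\<^sup>2) * supnorm (\<lambda>s. V 0 s - h s)" for k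
    using bound2[of k] unfolding g_def R_def bsum_def .
  show ?thesis
    by (rule exI[of _ 1]) (use b1 b2 in blast)
qed

end
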